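(* Let $G_0$ be a finite group with an involutive automorphism $g\mapsto\tilde g$. On $\mathcal H=\mathbb C^{G_0}$ with orthonormal basis $\{|g\rangle\}_{g\in G_0}$ let $D(g)=\sum_{h}|gh\rangle\langle h|$ for $g\in G_0$, and let $D(t)=\sum_g|\tilde g\rangle\langle g|K$ be antiunitary ($K$ = complex conjugation in this basis); set $D(gt)=D(g)D(t)$. Define on $\mathcal H\otimes\mathcal H$ $$U_1=\sum_{g\in G_0}D(g)\otimes|g^{-1}\rangle\langle g^{-1}|,\quad u_2=\sum_{g\in G_0}\tfrac1{\sqrt2}\big(e^{i\pi/4}|g\rangle+e^{-i\pi/4}|\tilde g\rangle\big)\langle g|,\quad u=(u_2\otimes\mathbb{1})U_1 .$$ Then $u$ is unitary and $u\,(D(g)\otimes D(g))\,u^\dagger=\mathbb{1}\otimes D(g)$ for every $g\in G_0\rtimes\mathbb Z_2^{\mathcal T}$ (i.e. for $g\in G_0$ and for $g=g_0t$, $g_0\in G_0$). Consequently, by iterating, $D(g)^{\otimes N}$ is unitarily equivalent (by a unitary independent of $g$) to $\mathbb{1}_{|G_0|^{N-1}}\otimes D(g)$ for all $g$. *)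

theory Defs
  imports Complex_Main "HOL-Algebra.Group"
begin

text \<open>Operators on a finite-dimensional Hilbert space with orthonormal basis indexed by a
finite set I are represented by their matrices (functions 'i => 'i => complex, only the
entries on I x I matter); vectors are functions 'i => complex (only values on I matter).\<close>

definition mmult :: "'i set \<Rightarrow> ('i \<Rightarrow> 'i \<Rightarrow> complex) \<Rightarrow> ('i \<Rightarrow> 'i \<Rightarrow> complex) \<Rightarrow> 'i \<Rightarrow> 'i \<Rightarrow> complex" where
  "mmult I A B = (\<lambda>x y. \<Sum>z\<in>I. A x z * B z y)"

definition adj :: "('i \<Rightarrow> 'i \<Rightarrow> complex) \<Rightarrow> 'i \<Rightarrow> 'i \<Rightarrow> complex" where
  "adj A = (\<lambda>x y. cnj (A y x))"

definition idm :: "'i \<Rightarrow> 'i \<Rightarrow> complex" where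
  "idm = (\<lambda>x y. if x = y then 1 else 0)"

definition unitary_on :: "'i set \<Rightarrow> ('i \<Rightarrow> 'i \<Rightarrow> complex) \<Rightarrow> bool" where
  "unitary_on I U \<longleftrightarrow> (\<forall>x\<in>I. \<forall>y\<in>I. mmult I U (adj U) x y = idm x y \<and> mmult I (adj U) U x y = idm x y)"

definition lin :: "'i set \<Rightarrow> ('i \<Rightarrow> 'i \<Rightarrow> complex) \<Rightarrow> ('i \<Rightarrow> complex) \<Rightarrow> 'i \<Rightarrow> complex" where
  "lin I M v = (\<lambda>x. \<Sum>y\<in>I. M x y * v y)"

definition cvec :: "('i \<Rightarrow> complex) \<Rightarrow> 'i \<Rightarrow> complex" where
  "cvec v = (\<lambda>x. cnj (v x))"

text \<open>A (possibly anti-linear) operator M K^c is represented by the pair (M, c);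
 c = True means the operator is antilinear, M K.\<close>
definition sapp :: "'i set \<Rightarrow> ('i \<Rightarrow> 'i \<Rightarrow> complex) \<times> bool \<Rightarrow> ('i \<Rightarrow> complex) \<Rightarrow> 'i \<Rightarrow> complex" where
  "sapp I Mc v = lin I (fst Mc) (if snd Mc then cvec v else v)"

definition kron :: "('i \<Rightarrow> 'i \<Rightarrow> complex) \<Rightarrow> ('j \<Rightarrow> 'j \<Rightarrow> complex) \<Rightarrow> ('i \<times> 'j) \<Rightarrow> ('i \<times> 'j) \<Rightarrow> complex" where
  "kron A B = (\<lambda>(x1, x2) (y1, y2). A x1 y1 * B x2 y2)"

text \<open>Tensor product of two operators of the same (anti)linearity type:
 (A K^c) \<otimes> (B K^c) = (A \<otimes> B) K^c, with K conjugation in the product basis.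
 (Only used with equal flags; the flag of the first factor is taken.)\<close>
definition stensor :: "('i \<Rightarrow> 'i \<Rightarrow> complex) \<times> bool \<Rightarrow> ('j \<Rightarrow> 'j \<Rightarrow> complex) \<times> bool
    \<Rightarrow> (('i \<times> 'j) \<Rightarrow> ('i \<times> 'j) \<Rightarrow> complex) \<times> bool" where
  "stensor A B = (kron (fst A) (fst B), snd A)"

text \<open>The representation D of G_0 \<rtimes> Z_2^T on C^{G_0}: the element g0 t^b
 (b = True means g0 t) is sent to D(g0) D(t)^b, where D(g0)|h> = |g0 h> and
 D(t) = \<Sum>_g |phi g><g| K.\<close>
definition Drep :: "('a, 'b) monoid_scheme \<Rightarrow> ('a \<Rightarrow> 'a) \<Rightarrow> 'a \<times> bool \<Rightarrow> ('a \<Rightarrow> 'a \<Rightarrow> complex) \<times> bool" where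
  "Drep G phi gb = ((\<lambda>x y. if x = fst gb \<otimes>\<^bsub>G\<^esub> (if snd gb then phi y else y) then 1 else 0), snd gb)"

definition U1mat :: "('a, 'b) monoid_scheme \<Rightarrow> ('a \<times> 'a) \<Rightarrow> ('a \<times> 'a) \<Rightarrow> complex" where
  "U1mat G = (\<lambda>x y. \<Sum>g\<in>carrier G.
      kron (fst (Drep G (\<lambda>z. z) (g, False)))
           (\<lambda>a c. if a = inv\<^bsub>G\<^esub> g \<and> c = inv\<^bsub>G\<^esub> g then 1 else 0) x y)"

definition u2mat :: "('a, 'b) monoid_scheme \<Rightarrow> ('a \<Rightarrow> 'a) \<Rightarrow> 'a \<Rightarrow> 'a \<Rightarrow> complex" where
  "u2mat G phi = (\<lambda>x y. \<Sum>g\<in>carrier G.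
      (1 / complex_of_real (sqrt 2)) *
        (cis (pi / 4) * (if x = g then 1 else 0) + cis (- pi / 4) * (if x = phi g then 1 else 0))
      * (if y = g then 1 else 0))"

definition umat :: "('a, 'b) monoid_scheme \<Rightarrow> ('a \<Rightarrow> 'a) \<Rightarrow> ('a \<times> 'a) \<Rightarrow> ('a \<times> 'a) \<Rightarrow> complex" where
  "umat G phi = mmult (carrier G \<times> carrier G) (kron (u2mat G phi) idm) (U1mat G)"

text \<open>N-fold tensor powers: basis of H^{\<otimes>N} indexed by lists of length N over G_0.\<close>
definition tidx :: "('a, 'b) monoid_scheme \<Rightarrow> nat \<Rightarrow> 'a list set" where
  "tidx G N = {xs. length xs = N \<and> set xs \<subseteq> carrier G}"

definition tpow :: "('a \<Rightarrow> 'a \<Rightarrow> complex) \<times> bool \<Rightarrow> ('a list \<Rightarrow> 'a list \<Rightarrow> complex) \<times> bool" where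
  "tpow Mc = ((\<lambda>xs ys. \<Prod>i<length xs. fst Mc (xs ! i) (ys ! i)), snd Mc)"

definition id_tensor :: "('a \<Rightarrow> 'a \<Rightarrow> complex) \<times> bool \<Rightarrow> ('a list \<Rightarrow> 'a list \<Rightarrow> complex) \<times> bool" where
  "id_tensor Mc = ((\<lambda>xs ys. if butlast xs = butlast ys then fst Mc (last xs) (last ys) else 0), snd Mc)"

end

theory Submission
  imports Defs
begin


definition Wm :: "'i set \<Rightarrow> ('i \<Rightarrow> 'i) \<Rightarrow> 'i \<Rightarrow> 'i \<Rightarrow> complex" where
 "Wm J s x y = (if y \<in> J then (1 / complex_of_real (sqrt 2)) *
    (cis (pi / 4) * (if x = y then 1 else 0) + cis (- pi / 4) * (if x = s y then 1 else 0)) else 0)"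

lemma sum_two_ind:
  assumes "finite J" "x \<in> J"
  shows "(\<Sum>z\<in>J. (if z = x then \<alpha> else 0) * (if z = y then \<gamma> else 0)) = (if x = y then \<alpha> * \<gamma> else (0::complex))"
proof -
  have "(\<Sum>z\<in>J. (if z = x then \<alpha> else 0) * (if z = y then \<gamma> else 0)) = (\<Sum>z\<in>J. if z = x then (if x = y then \<alpha> * \<gamma> else 0) else 0)"
    by (rule sum.cong) auto
  also have "\<dots> = (if x = y then \<alpha> * \<gamma> else 0)" using assms by simp
  finally show ?thesis .
qed

lemma sum_four_ind:
  assumes "finite J" "x \<in> J" "x' \<in> J"
  shows "(\<Sum>z\<in>J. ((if z = x then \<alpha> else 0) + (if z = x' then \<beta> else 0)) * ((if z = y then \<gamma> else 0) + (if z = y' then \<delta> else 0)))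
   = (if x = y then \<alpha> * \<gamma> else (0::complex)) + (if x = y' then \<alpha> * \<delta> else 0) + (if x' = y then \<beta> * \<gamma> else 0) + (if x' = y' then \<beta> * \<delta> else 0)"
  by (simp add: distrib_left distrib_right sum.distrib sum_two_ind assms)

lemma consts_facts:
  "cis (pi/4) * cis (- pi / 4) = 1" "cis (- pi/4) * cis (pi / 4) = 1"
  "cis (pi/4) * cis (pi / 4) + cis (- pi/4) * cis (- pi / 4) = 0"
  "(1 / complex_of_real (sqrt 2)) * (1 / complex_of_real (sqrt 2)) = 1/2"
  "cnj (1 / complex_of_real (sqrt 2)) = 1 / complex_of_real (sqrt 2)"
  "cnj (cis (pi/4)) = cis (- pi / 4)" "cnj (cis (- pi/4)) = cis (pi / 4)"
proof -
  show "cis (pi/4) * cis (- pi / 4) = 1" "cis (- pi/4) * cis (pi / 4) = 1"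
    by (simp_all add: cis_mult)
  have "cis (pi/4) * cis (pi / 4) = \<i>" by (simp add: cis_mult)
  moreover have "cis (- pi/4) * cis (- pi / 4) = - \<i>" by (simp add: cis_mult)
  ultimately show "cis (pi/4) * cis (pi / 4) + cis (- pi/4) * cis (- pi / 4) = 0" by simp
  have h: "complex_of_real (sqrt 2) * complex_of_real (sqrt 2) = 2"
    unfolding of_real_mult[symmetric] by simp
  have "(1 / complex_of_real (sqrt 2)) * (1 / complex_of_real (sqrt 2)) = 1 / (complex_of_real (sqrt 2) * complex_of_real (sqrt 2))"
    by (simp only: divide_inverse mult_1 inverse_mult_distrib)
  then show "(1 / complex_of_real (sqrt 2)) * (1 / complex_of_real (sqrt 2)) = 1/2"
    by (simp only: h)
  show "cnj (1 / complex_of_real (sqrt 2)) = 1 / complex_of_real (sqrt 2)" by simp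
  show "cnj (cis (pi/4)) = cis (- pi / 4)" "cnj (cis (- pi/4)) = cis (pi / 4)" by (simp_all add: cis_cnj)
qed

lemma consts_facts2: "cis (- pi/4) * cis (- pi / 4) + cis (pi/4) * cis (pi / 4) = 0"
  using consts_facts(3) by (simp add: add.commute)

lemma Wm_row:
  assumes "x \<in> J" "z \<in> J" "s ` J \<subseteq> J" "\<forall>y\<in>J. s (s y) = y"
  shows "Wm J s x z = (if z = x then (1 / complex_of_real (sqrt 2)) * cis (pi/4) else 0)
     + (if z = s x then (1 / complex_of_real (sqrt 2)) * cis (- pi/4) else 0)"
proof -
  have "(x = s z) = (z = s x)" using assms by (metis image_subset_iff)
  then show ?thesis using assms by (auto simp: Wm_def add_divide_distrib)
qed

lemma Wm_row_cnj:
  assumes "x \<in> J" "z \<in> J" "s ` J \<subseteq> J" "\<forall>y\<in>J. s (s y) = y"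
  shows "cnj (Wm J s x z) = (if z = x then (1 / complex_of_real (sqrt 2)) * cis (- pi/4) else 0)
     + (if z = s x then (1 / complex_of_real (sqrt 2)) * cis (pi/4) else 0)"
  using Wm_row[OF assms] consts_facts by simp

lemma Wm_col:
  assumes "x \<in> J"
  shows "Wm J s z x = (if z = x then (1 / complex_of_real (sqrt 2)) * cis (pi/4) else 0)
     + (if z = s x then (1 / complex_of_real (sqrt 2)) * cis (- pi/4) else 0)"
  using assms by (auto simp: Wm_def add_divide_distrib)

lemma Wm_col_cnj:
  assumes "x \<in> J"
  shows "cnj (Wm J s z x) = (if z = x then (1 / complex_of_real (sqrt 2)) * cis (- pi/4) else 0)
     + (if z = s x then (1 / complex_of_real (sqrt 2)) * cis (pi/4) else 0)"
  using Wm_col[OF assms, of s z] consts_facts by simp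

lemma final_arith:
  fixes c a b :: complex
  assumes "c * c = 1/2" "a * b = 1" "a * a + b * b = 0" "(sx = y) = (x = sy)" "(sx = sy) = (x = y)"
  shows "(if x = y then c * a * (c * b) else 0) + (if x = sy then c * a * (c * a) else 0) +
    (if sx = y then c * b * (c * b) else 0) + (if sx = sy then c * b * (c * a) else 0) = idm x y"
proof -
  have e1: "c * a * (c * b) = 1/2" using assms by (metis mult.commute mult.left_commute mult_1_right)
  have e2: "c * a * (c * a) + c * b * (c * b) = 0" using assms
    by (metis distrib_left mult.commute mult.left_commute mult_zero_right)
  have e3: "c * b * (c * a) = 1/2" using e1 by (simp add: ac_simps)
  have e5: "1/2 + c * a * (c * a) + c * b * (c * b) + 1/2 = (1::complex)"
    using e2 by (simp add: add.assoc)
  have e6: "2 * (a * (b * (c * c))) = 1" 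
  proof -
    have "2 * (a * (b * (c * c))) = 2 * ((a * b) * (c * c))" by (simp only: mult.assoc)
    also have "\<dots> = 2 * (1 * (1/2))" by (simp only: assms(1,2))
    finally show ?thesis by simp
  qed
  show ?thesis
  proof (cases "x = y")
    case True
    then show ?thesis using assms(4,5) e1 e3 e5 e6 by (cases "x = sy") (simp_all add: idm_def)
  next
    case False
    then show ?thesis using assms(4,5) e2 by (cases "x = sy") (simp_all add: idm_def)
  qed
qed

lemma Wm_WW:
  assumes "finite J" "x \<in> J" "y \<in> J" "s ` J \<subseteq> J" "\<forall>y\<in>J. s (s y) = y"
  shows "(\<Sum>z\<in>J. Wm J s x z * cnj (Wm J s y z)) = idm x y"
proof -
  have sx: "s x \<in> J" "s y \<in> J" using assms by auto
  have "(\<Sum>z\<in>J. Wm J s x z * cnj (Wm J s y z)) = (\<Sum>z\<in>J.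
     ((if z = x then (1 / complex_of_real (sqrt 2)) * cis (pi/4) else 0)
     + (if z = s x then (1 / complex_of_real (sqrt 2)) * cis (- pi/4) else 0)) *
     ((if z = y then (1 / complex_of_real (sqrt 2)) * cis (- pi/4) else 0)
     + (if z = s y then (1 / complex_of_real (sqrt 2)) * cis (pi/4) else 0)))"
    using assms by (intro sum.cong refl) (simp only: Wm_row_cnj[OF assms(3) _ assms(4,5)] Wm_row[OF assms(2) _ assms(4,5)])
  also have "\<dots> = idm x y"
    apply (subst sum_four_ind[OF assms(1,2) sx(1)])
    apply (rule final_arith[OF consts_facts(4) consts_facts(1) consts_facts(3)])
    using assms sx by (metis image_subset_iff)+
  finally show ?thesis .
qed

lemma Wm_aWW:
  assumes "finite J" "x \<in> J" "y \<in> J" "s ` J \<subseteq> J" "\<forall>y\<in>J. s (s y) = y"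
  shows "(\<Sum>z\<in>J. cnj (Wm J s z x) * Wm J s z y) = idm x y"
proof -
  have sx: "s x \<in> J" "s y \<in> J" using assms by auto
  have "(\<Sum>z\<in>J. cnj (Wm J s z x) * Wm J s z y) = (\<Sum>z\<in>J.
     ((if z = x then (1 / complex_of_real (sqrt 2)) * cis (- pi/4) else 0)
     + (if z = s x then (1 / complex_of_real (sqrt 2)) * cis (pi/4) else 0)) *
     ((if z = y then (1 / complex_of_real (sqrt 2)) * cis (pi/4) else 0)
     + (if z = s y then (1 / complex_of_real (sqrt 2)) * cis (- pi/4) else 0)))"
    using assms by (intro sum.cong refl) (simp only: Wm_col_cnj[OF assms(2)] Wm_col[OF assms(3)])
  also have "\<dots> = idm x y"
    apply (subst sum_four_ind[OF assms(1,2) sx(1)])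
    apply (rule final_arith[OF consts_facts(4) consts_facts(2) consts_facts2])
    using assms sx by (metis image_subset_iff)+
  finally show ?thesis .
qed

lemma Wm_sigma:
  assumes "y \<in> J" "s ` J \<subseteq> J" "\<forall>y\<in>J. s (s y) = y"
  shows "Wm J s x (s y) = cnj (Wm J s x y)"
  using assms consts_facts by (auto simp: Wm_def)

lemma Wm_tau:
  assumes "x \<in> J" "z \<in> J" "inj_on t J" "t ` J \<subseteq> J" "s ` J \<subseteq> J" "\<forall>y\<in>J. s (t y) = t (s y)"
  shows "Wm J s (t x) (t z) = Wm J s x z"
proof -
  have "(t x = t z) = (x = z)" using assms by (meson inj_on_eq_iff)
  moreover have "(t x = s (t z)) = (x = s z)" using assms
    by (metis image_subset_iff inj_on_eq_iff)
  ultimately show ?thesis using assms by (auto simp: Wm_def)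
qed

lemma lin_lin:
  assumes "finite J"
  shows "lin J A (lin J B w) = lin J (mmult J A B) w"
proof
  fix x
  have "lin J A (lin J B w) x = (\<Sum>y\<in>J. \<Sum>z\<in>J. A x y * (B y z * w z))"
    by (simp add: lin_def sum_distrib_left)
  also have "\<dots> = (\<Sum>z\<in>J. \<Sum>y\<in>J. A x y * B y z * w z)"
    by (subst sum.swap) (simp add: mult.assoc)
  also have "\<dots> = lin J (mmult J A B) w x"
    by (simp add: lin_def mmult_def sum_distrib_right)
  finally show "lin J A (lin J B w) x = lin J (mmult J A B) w x" .
qed

lemma lin_cong:
  assumes "\<forall>y\<in>J. A x y = B x y"
  shows "lin J A w x = lin J B w x"
  using assms by (simp add: lin_def)

lemma cvec_lin: "cvec (lin J A w) = lin J (\<lambda>x y. cnj (A x y)) (cvec w)"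
  by (simp add: cvec_def lin_def fun_eq_iff)

lemma mmult_perm_right:
  assumes "finite J" "y \<in> J" "m y \<in> J" "\<forall>z\<in>J. M z y = (if z = m y then 1 else 0)"
  shows "mmult J A M x y = A x (m y)"
proof -
  have "mmult J A M x y = (\<Sum>z\<in>J. if z = m y then A x z else 0)"
    unfolding mmult_def using assms by (intro sum.cong) auto
  also have "\<dots> = A x (m y)" using assms by simp
  finally show ?thesis .
qed


lemma generic:
  assumes fin: "finite J" and s: "s ` J \<subseteq> J" "\<forall>y\<in>J. s (s y) = y"
    and p: "bij_betw p J J" and t: "inj_on t J" "t ` J \<subseteq> J" and st: "\<forall>y\<in>J. s (t y) = t (s y)"
    and m: "m ` J \<subseteq> J"
    and u: "\<forall>x\<in>J. \<forall>y\<in>J. u x y = Wm J s x (p y)"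
    and M: "\<forall>x\<in>J. \<forall>y\<in>J. fst Mc x y = (if x = m y then 1 else 0)" and Mb: "snd Mc = b"
    and T: "\<forall>x\<in>J. \<forall>y\<in>J. fst Tc x y = (if x = t y then 1 else 0)" and Tb: "snd Tc = b"
    and rel: "\<forall>y\<in>J. p (m y) = (if b then s (t (p y)) else t (p y))"
  shows "unitary_on J u \<and> (\<forall>v. \<forall>x\<in>J. lin J u (sapp J Mc (lin J (adj u) v)) x = sapp J Tc v x)"
proof -
  have pJ: "p z \<in> J" if "z \<in> J" for z using p that bij_betwE by blast
  have pinj: "inj_on p J" using p bij_betw_imp_inj_on by blast
  have tJ: "t z \<in> J" if "z \<in> J" for z using t that by blast
  have sJ: "s z \<in> J" if "z \<in> J" for z using s that by blast
  have mJ: "m z \<in> J" if "z \<in> J" for z using m that by blast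
  have tsurj: "t ` J = J" using endo_inj_surj[OF fin t(2) t(1)] .
  have reidx: "(\<Sum>z\<in>J. f (p z)) = (\<Sum>z\<in>J. f z)" for f :: "_ \<Rightarrow> complex"
    using sum.reindex_bij_betw[OF p] .
  have un: "unitary_on J u"
    unfolding unitary_on_def
  proof (intro ballI conjI)
    fix x y assume xy: "x \<in> J" "y \<in> J"
    have "mmult J u (adj u) x y = (\<Sum>z\<in>J. Wm J s x (p z) * cnj (Wm J s y (p z)))"
      unfolding mmult_def adj_def using u xy by (intro sum.cong) auto
    also have "\<dots> = (\<Sum>z\<in>J. Wm J s x z * cnj (Wm J s y z))" by (rule reidx)
    also have "\<dots> = idm x y" using Wm_WW[OF fin xy s] .
    finally show "mmult J u (adj u) x y = idm x y" .
    have "mmult J (adj u) u x y = (\<Sum>z\<in>J. cnj (Wm J s z (p x)) * Wm J s z (p y))"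
      unfolding mmult_def adj_def using u xy by (intro sum.cong) auto
    also have "\<dots> = idm (p x) (p y)" using Wm_aWW[OF fin pJ[OF xy(1)] pJ[OF xy(2)] s] .
    also have "\<dots> = idm x y" using pinj xy by (auto simp: idm_def inj_on_eq_iff)
    finally show "mmult J (adj u) u x y = idm x y" .
  qed
  have uM: "mmult J u (fst Mc) x z = (if b then cnj (Wm J s x (t (p z))) else Wm J s x (t (p z)))"
    if "z \<in> J" "x \<in> J" for x z
  proof -
    have "mmult J u (fst Mc) x z = u x (m z)"
      by (rule mmult_perm_right[where m=m, OF fin that(1) mJ[OF that(1)]]) (use M that in auto)
    also have "\<dots> = Wm J s x (p (m z))" using u that mJ by blast
    also have "\<dots> = (if b then cnj (Wm J s x (t (p z))) else Wm J s x (t (p z)))"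
      using rel that Wm_sigma[OF tJ[OF pJ[OF that(1)]] s] by auto
    finally show ?thesis .
  qed
  have key: "(\<Sum>z\<in>J. Wm J s x (t z) * cnj (Wm J s y z)) = (if x = t y then 1 else 0)"
    if xy: "x \<in> J" "y \<in> J" for x y
  proof -
    obtain x' where x': "x' \<in> J" "x = t x'" using tsurj xy by blast
    have "(\<Sum>z\<in>J. Wm J s x (t z) * cnj (Wm J s y z)) = (\<Sum>z\<in>J. Wm J s x' z * cnj (Wm J s y z))"
      using x' Wm_tau[OF x'(1) _ t s(1) st] by (intro sum.cong) auto
    also have "\<dots> = idm x' y" using Wm_WW[OF fin x'(1) xy(2) s] .
    also have "\<dots> = (if x = t y then 1 else 0)"
      using x' xy t(1) by (auto simp: idm_def inj_on_eq_iff)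
    finally show ?thesis .
  qed
  have main: "lin J u (sapp J Mc (lin J (adj u) v)) x = sapp J Tc v x" if x: "x \<in> J" for v x
  proof (cases b)
    case False
    have "lin J u (sapp J Mc (lin J (adj u) v)) x = lin J u (lin J (fst Mc) (lin J (adj u) v)) x"
      using Mb False by (simp add: sapp_def)
    also have "\<dots> = lin J (mmult J u (fst Mc)) (lin J (adj u) v) x"
      by (simp only: lin_lin[OF fin, of u "fst Mc"])
    also have "\<dots> = lin J (mmult J (mmult J u (fst Mc)) (adj u)) v x"
      by (simp only: lin_lin[OF fin])
    also have "\<dots> = lin J (fst Tc) v x"
    proof (rule lin_cong, rule ballI)
      fix y assume y: "y \<in> J"
      have "mmult J (mmult J u (fst Mc)) (adj u) x y = (\<Sum>z\<in>J. Wm J s x (t (p z)) * cnj (Wm J s y (p z)))"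
        unfolding mmult_def[of J "mmult J u (fst Mc)"]
      proof (rule sum.cong[OF refl])
        fix z assume z: "z \<in> J"
        have "adj u z y = cnj (Wm J s y (p z))" unfolding adj_def using u y z by simp
        then show "mmult J u (fst Mc) x z * adj u z y = Wm J s x (t (p z)) * cnj (Wm J s y (p z))"
          using uM[OF z x] False by simp
      qed
      also have "\<dots> = (\<Sum>z\<in>J. Wm J s x (t z) * cnj (Wm J s y z))"
        by (rule reidx[where f = "\<lambda>z. Wm J s x (t z) * cnj (Wm J s y z)"])
      also have "\<dots> = fst Tc x y" using key[OF x y] T x y by simp
      finally show "mmult J (mmult J u (fst Mc)) (adj u) x y = fst Tc x y" .
    qed
    also have "\<dots> = sapp J Tc v x" using Tb False by (simp add: sapp_def)
    finally show ?thesis .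
  next
    case True
    have "lin J u (sapp J Mc (lin J (adj u) v)) x
       = lin J u (lin J (fst Mc) (lin J (\<lambda>a c. cnj (adj u a c)) (cvec v))) x"
      using Mb True by (simp add: sapp_def cvec_lin del: adj_def)
    also have "\<dots> = lin J (mmult J u (fst Mc)) (lin J (\<lambda>a c. cnj (adj u a c)) (cvec v)) x"
      by (simp only: lin_lin[OF fin, of u "fst Mc"])
    also have "\<dots> = lin J (mmult J (mmult J u (fst Mc)) (\<lambda>a c. cnj (adj u a c))) (cvec v) x"
      by (simp only: lin_lin[OF fin])
    also have "\<dots> = lin J (fst Tc) (cvec v) x"
    proof (rule lin_cong, rule ballI)
      fix y assume y: "y \<in> J"
      have "mmult J (mmult J u (fst Mc)) (\<lambda>a c. cnj (adj u a c)) x y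
          = (\<Sum>z\<in>J. cnj (Wm J s x (t (p z)) * cnj (Wm J s y (p z))))"
        unfolding mmult_def[of J "mmult J u (fst Mc)"]
      proof (rule sum.cong[OF refl])
        fix z assume z: "z \<in> J"
        have "cnj (adj u z y) = Wm J s y (p z)" unfolding adj_def using u y z by simp
        then show "mmult J u (fst Mc) x z * cnj (adj u z y) = cnj (Wm J s x (t (p z)) * cnj (Wm J s y (p z)))"
          using uM[OF z x] True by simp
      qed
      also have "\<dots> = (\<Sum>z\<in>J. cnj (Wm J s x (t z) * cnj (Wm J s y z)))"
        by (rule reidx[where f = "\<lambda>z. cnj (Wm J s x (t z) * cnj (Wm J s y z))"])
      also have "\<dots> = cnj (\<Sum>z\<in>J. Wm J s x (t z) * cnj (Wm J s y z))" by simp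
      also have "\<dots> = fst Tc x y" using key[OF x y] T x y by simp
      finally show "mmult J (mmult J u (fst Mc)) (\<lambda>a c. cnj (adj u a c)) x y = fst Tc x y" .
    qed
    also have "\<dots> = sapp J Tc v x" using Tb True by (simp add: sapp_def)
    finally show ?thesis .
  qed
  show ?thesis using un main by blast
qed





lemma (in group) inv_cancel3:
  assumes "a \<in> carrier G" "c \<in> carrier G" "g \<in> carrier G"
  shows "inv (g \<otimes> a) \<otimes> (g \<otimes> c) = inv a \<otimes> c"
proof -
  have 1: "inv g \<otimes> (g \<otimes> c) = c" using assms by (simp add: m_assoc[symmetric])
  have "inv (g \<otimes> a) \<otimes> (g \<otimes> c) = (inv a \<otimes> inv g) \<otimes> (g \<otimes> c)"
    using assms by (simp add: inv_mult_group)
  also have "\<dots> = inv a \<otimes> (inv g \<otimes> (g \<otimes> c))" using assms by (simp add: m_assoc)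
  also have "\<dots> = inv a \<otimes> c" using 1 by simp
  finally show ?thesis .
qed

lemma phi_facts:
  assumes "group G" "phi \<in> iso G G" "\<forall>x\<in>carrier G. phi (phi x) = x"
  shows "\<And>x. x \<in> carrier G \<Longrightarrow> phi x \<in> carrier G"
    and "\<And>x y. x \<in> carrier G \<Longrightarrow> y \<in> carrier G \<Longrightarrow> phi (x \<otimes>\<^bsub>G\<^esub> y) = phi x \<otimes>\<^bsub>G\<^esub> phi y"
    and "\<And>x. x \<in> carrier G \<Longrightarrow> phi (inv\<^bsub>G\<^esub> x) = inv\<^bsub>G\<^esub> (phi x)"
    and "inj_on phi (carrier G)"
proof -
  have h: "phi \<in> hom G G" using assms(2) by (simp add: iso_def)
  have gh: "group_hom G G phi" using assms(1) h by (simp add: group_hom_def group_hom_axioms_def)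
  show "\<And>x. x \<in> carrier G \<Longrightarrow> phi x \<in> carrier G" using group_hom.hom_closed[OF gh] .
  show "\<And>x y. x \<in> carrier G \<Longrightarrow> y \<in> carrier G \<Longrightarrow> phi (x \<otimes>\<^bsub>G\<^esub> y) = phi x \<otimes>\<^bsub>G\<^esub> phi y"
    using group_hom.hom_mult[OF gh] by blast
  show "\<And>x. x \<in> carrier G \<Longrightarrow> phi (inv\<^bsub>G\<^esub> x) = inv\<^bsub>G\<^esub> (phi x)"
    using group_hom.hom_inv[OF gh] by blast
  show "inj_on phi (carrier G)" using assms(3) by (metis inj_on_inverseI)
qed

lemma Drep_fst: "fst (Drep G phi (g, b)) x y = (if x = g \<otimes>\<^bsub>G\<^esub> (if b then phi y else y) then 1 else 0)"
  by (simp add: Drep_def)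

lemma Drep_snd: "snd (Drep G phi (g, b)) = b"
  by (simp add: Drep_def)

lemma u2mat_Wm:
  assumes "finite (carrier G)"
  shows "u2mat G phi x y = Wm (carrier G) phi x y"
proof (cases "y \<in> carrier G")
  case True
  have "u2mat G phi x y = (\<Sum>g\<in>carrier G. if g = y then (1 / complex_of_real (sqrt 2)) *
        (cis (pi / 4) * (if x = y then 1 else 0) + cis (- pi / 4) * (if x = phi y then 1 else 0)) else 0)"
    unfolding u2mat_def by (intro sum.cong) auto
  also have "\<dots> = Wm (carrier G) phi x y" using True assms by (simp add: Wm_def)
  finally show ?thesis .
next
  case False
  have "u2mat G phi x y = 0" unfolding u2mat_def using False by (intro sum.neutral) auto
  then show ?thesis using False by (simp add: Wm_def)
qed

lemma U1mat_perm:
  fixes G (structure)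
  assumes "group G" "finite (carrier G)" "y1 \<in> carrier G" "y2 \<in> carrier G"
  shows "U1mat G (z1, z2) (y1, y2) = (if (z1, z2) = (inv\<^bsub>G\<^esub> y2 \<otimes>\<^bsub>G\<^esub> y1, y2) then 1 else 0)"
proof -
  interpret group G by fact
  have "U1mat G (z1, z2) (y1, y2) = (\<Sum>g\<in>carrier G. if g = inv y2 then
       (if (z1, z2) = (inv y2 \<otimes> y1, y2) then 1 else 0) else 0)"
    unfolding U1mat_def kron_def
  proof (intro sum.cong refl)
    fix g assume g: "g \<in> carrier G"
    have e: "(y2 = inv g) = (g = inv y2)" using g assms by (metis inv_inv)
    show "(case (z1, z2) of (x1, x2) \<Rightarrow> \<lambda>(y1, y2). fst (Drep G (\<lambda>z. z) (g, False)) x1 y1 *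
            (if x2 = inv g \<and> y2 = inv g then 1 else 0)) (y1, y2) =
         (if g = inv y2 then if (z1, z2) = (inv y2 \<otimes> y1, y2) then 1 else 0 else 0)"
      using e g assms by (auto simp: Drep_fst)
  qed
  also have "\<dots> = (if (z1, z2) = (inv y2 \<otimes> y1, y2) then 1 else 0)" using assms by simp
  finally show ?thesis .
qed

lemma ind_mult: "(if P then 1 else 0) * (if Q then 1 else 0) = (if P \<and> Q then 1 else (0::complex))"
  by simp

lemma part2:
  fixes G :: "('a, 'b) monoid_scheme" (structure)
  assumes grp: "group G" and fin: "finite (carrier G)" and iso: "phi \<in> iso G G"
    and invol: "\<forall>x\<in>carrier G. phi (phi x) = x" and g: "g \<in> carrier G"
  shows "unitary_on (carrier G \<times> carrier G) (umat G phi) \<and>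
    (\<forall>v. \<forall>x\<in>carrier G \<times> carrier G.
          lin (carrier G \<times> carrier G) (umat G phi)
            (sapp (carrier G \<times> carrier G) (stensor (Drep G phi (g, b)) (Drep G phi (g, b)))
              (lin (carrier G \<times> carrier G) (adj (umat G phi)) v)) x
        = sapp (carrier G \<times> carrier G) (stensor (idm, b) (Drep G phi (g, b))) v x)"
proof -
  interpret group G by fact
  note pf = phi_facts[OF grp iso invol]
  define J where "J = carrier G \<times> carrier G"
  define s2 :: "'a \<times> 'a \<Rightarrow> 'a \<times> 'a" where "s2 = (\<lambda>z. (phi (fst z), snd z))"
  define p2 :: "'a \<times> 'a \<Rightarrow> 'a \<times> 'a" where "p2 = (\<lambda>y. (inv (snd y) \<otimes> fst y, snd y))"
  define q2 :: "'a \<times> 'a \<Rightarrow> 'a \<times> 'a" where "q2 = (\<lambda>y. (snd y \<otimes> fst y, snd y))"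
  define f where "f = (\<lambda>y. g \<otimes> (if b then phi y else y))"
  define m2 :: "'a \<times> 'a \<Rightarrow> 'a \<times> 'a" where "m2 = (\<lambda>y. (f (fst y), f (snd y)))"
  define t2 :: "'a \<times> 'a \<Rightarrow> 'a \<times> 'a" where "t2 = (\<lambda>y. (fst y, f (snd y)))"
  have finJ: "finite J" using fin by (simp add: J_def)
  have fC: "f y \<in> carrier G" if "y \<in> carrier G" for y using that g pf(1) by (simp add: f_def)
  have finj: "inj_on f (carrier G)"
  proof (rule inj_onI)
    fix x y assume xy: "x \<in> carrier G" "y \<in> carrier G" "f x = f y"
    show "x = y"
    proof (cases b)
      case True
      then have "phi x = phi y" using xy g pf(1) by (simp add: f_def)
      then show ?thesis using pf(4) xy by (meson inj_on_eq_iff)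
    next
      case False
      then show ?thesis using xy g by (simp add: f_def)
    qed
  qed
  have s2J: "s2 ` J \<subseteq> J"
  proof (rule image_subsetI)
    fix y assume "y \<in> J" then show "s2 y \<in> J" using pf(1) by (cases y) (simp add: s2_def J_def)
  qed
  have s2inv: "\<forall>y\<in>J. s2 (s2 y) = y" using invol by (auto simp: s2_def J_def)
  have p2bij: "bij_betw p2 J J"
    by (rule bij_betw_byWitness[where f' = q2]) (auto simp: p2_def q2_def J_def m_assoc[symmetric])
  have t2inj: "inj_on t2 J" using finj by (auto simp: inj_on_def t2_def J_def)
  have t2J: "t2 ` J \<subseteq> J"
  proof (rule image_subsetI)
    fix y assume "y \<in> J" then show "t2 y \<in> J" using fC by (cases y) (simp add: t2_def J_def)
  qed
  have st: "\<forall>y\<in>J. s2 (t2 y) = t2 (s2 y)" by (simp add: s2_def t2_def)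
  have m2J: "m2 ` J \<subseteq> J"
  proof (rule image_subsetI)
    fix y assume "y \<in> J" then show "m2 y \<in> J" using fC by (cases y) (simp add: m2_def J_def)
  qed
  have u: "\<forall>x\<in>J. \<forall>y\<in>J. umat G phi x y = Wm J s2 x (p2 y)"
  proof (intro ballI)
    fix x y assume x: "x \<in> J" and y: "y \<in> J"
    have py: "p2 y \<in> J" using y by (auto simp: p2_def J_def)
    have "umat G phi x y = (\<Sum>z\<in>J. if z = p2 y then kron (u2mat G phi) idm x z else 0)"
      unfolding umat_def mmult_def J_def
    proof (intro sum.cong refl)
      fix z assume "z \<in> carrier G \<times> carrier G"
      show "kron (u2mat G phi) idm x z * U1mat G z y = (if z = p2 y then kron (u2mat G phi) idm x z else 0)"
        using U1mat_perm[OF grp fin, of "fst y" "snd y" "fst z" "snd z"] y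
        by (auto simp: p2_def J_def)
    qed
    also have "\<dots> = kron (u2mat G phi) idm x (p2 y)" using py finJ by simp
    also have "\<dots> = Wm J s2 x (p2 y)"
      using py by (cases x, cases "p2 y") (auto simp: kron_def u2mat_Wm[OF fin] Wm_def idm_def s2_def J_def)
    finally show "umat G phi x y = Wm J s2 x (p2 y)" .
  qed
  have M: "\<forall>x\<in>J. \<forall>y\<in>J. fst (stensor (Drep G phi (g, b)) (Drep G phi (g, b))) x y = (if x = m2 y then 1 else 0)"
  proof (intro ballI)
    fix x y :: "'a \<times> 'a"
    show "fst (stensor (Drep G phi (g, b)) (Drep G phi (g, b))) x y = (if x = m2 y then 1 else 0)"
      by (cases x; cases y) (simp add: stensor_def kron_def Drep_fst m2_def f_def ind_mult)
  qed
  have T: "\<forall>x\<in>J. \<forall>y\<in>J. fst (stensor (idm, b) (Drep G phi (g, b))) x y = (if x = t2 y then 1 else 0)"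
  proof (intro ballI)
    fix x y :: "'a \<times> 'a"
    show "fst (stensor (idm, b) (Drep G phi (g, b))) x y = (if x = t2 y then 1 else 0)"
      by (cases x; cases y) (simp add: stensor_def kron_def Drep_fst t2_def f_def idm_def ind_mult)
  qed
  have rel: "\<forall>y\<in>J. p2 (m2 y) = (if b then s2 (t2 (p2 y)) else t2 (p2 y))"
  proof
    fix y assume y: "y \<in> J"
    then have y1: "fst y \<in> carrier G" and y2: "snd y \<in> carrier G" by (auto simp: J_def)
    show "p2 (m2 y) = (if b then s2 (t2 (p2 y)) else t2 (p2 y))"
    proof (cases b)
      case True
      then show ?thesis using y1 y2 g pf
        by (simp add: p2_def m2_def s2_def t2_def f_def inv_cancel3)
    next
      case False
      then show ?thesis using y1 y2 g
        by (simp add: p2_def m2_def s2_def t2_def f_def inv_cancel3)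
    qed
  qed
  have "unitary_on J (umat G phi) \<and> (\<forall>v. \<forall>x\<in>J. lin J (umat G phi) (sapp J (stensor (Drep G phi (g, b)) (Drep G phi (g, b))) (lin J (adj (umat G phi)) v)) x = sapp J (stensor (idm, b) (Drep G phi (g, b))) v x)"
    by (rule generic[OF finJ s2J s2inv p2bij t2inj t2J st m2J u M _ T _ rel]) (simp_all add: stensor_def Drep_snd)
  then show ?thesis by (simp add: J_def)
qed



lemma prod_ind: "(\<Prod>i<(n::nat). if P i then 1 else (0::complex)) = (if \<forall>i<n. P i then 1 else 0)"
proof (induction n)
  case 0 then show ?case by simp
next
  case (Suc n)
  then show ?case by (auto simp: lessThan_Suc less_Suc_eq)
qed

lemma tidx_snoc: "(bl @ [l] \<in> tidx G N) = (set bl \<subseteq> carrier G \<and> l \<in> carrier G \<and> Suc (length bl) = N)"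
  by (auto simp: tidx_def)

lemma tidx_decomp:
  assumes "xs \<in> tidx G N" "N \<ge> 1"
  obtains bl l where "xs = bl @ [l]" "set bl \<subseteq> carrier G" "l \<in> carrier G" "Suc (length bl) = N"
proof -
  have ne: "xs \<noteq> []" using assms by (auto simp: tidx_def)
  then have "xs = butlast xs @ [last xs]" by simp
  moreover have "set (butlast xs @ [last xs]) \<subseteq> carrier G" using assms(1) calculation
    by (auto simp: tidx_def)
  ultimately show ?thesis using that assms(1) by (metis tidx_snoc)
qed

lemma tidx_decompJ:
  assumes "xs \<in> J" "J = tidx G N" "N \<ge> 1"
  obtains bl l where "xs = bl @ [l]" "set bl \<subseteq> carrier G" "l \<in> carrier G" "Suc (length bl) = N"
  using tidx_decomp[of xs G N] assms by blast

lemma part3: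
  fixes G :: "('a, 'b) monoid_scheme" (structure)
  assumes grp: "group G" and fin: "finite (carrier G)" and iso: "phi \<in> iso G G"
    and invol: "\<forall>x\<in>carrier G. phi (phi x) = x" and N: "N \<ge> 1"
  shows "\<exists>U. unitary_on (tidx G N) U \<and>
          (\<forall>g\<in>carrier G. \<forall>b. \<forall>v. \<forall>x\<in>tidx G N.
             lin (tidx G N) U (sapp (tidx G N) (tpow (Drep G phi (g, b)))
               (lin (tidx G N) (adj U) v)) x
           = sapp (tidx G N) (id_tensor (Drep G phi (g, b))) v x)"
proof -
  interpret group G by fact
  note pf = phi_facts[OF grp iso invol]
  define J where "J = tidx G N"
  define s3 :: "'a list \<Rightarrow> 'a list" where "s3 = (\<lambda>xs. map phi (butlast xs) @ [last xs])"
  define p3 :: "'a list \<Rightarrow> 'a list" where "p3 = (\<lambda>xs. map (\<lambda>y. inv (last xs) \<otimes> y) (butlast xs) @ [last xs])"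
  define q3 :: "'a list \<Rightarrow> 'a list" where "q3 = (\<lambda>xs. map (\<lambda>y. last xs \<otimes> y) (butlast xs) @ [last xs])"
  define U where "U = (\<lambda>x y. Wm J s3 x (p3 y))"
  have finJ: "finite J"
  proof -
    have "J \<subseteq> {xs. set xs \<subseteq> carrier G \<and> length xs = N}" by (auto simp: J_def tidx_def)
    then show ?thesis using finite_lists_length_eq[OF fin] finite_subset by blast
  qed
  have s3J: "s3 ` J \<subseteq> J"
  proof (rule image_subsetI)
    fix xs assume "xs \<in> J"
    then obtain bl l where "xs = bl @ [l]" "set bl \<subseteq> carrier G" "l \<in> carrier G" "Suc (length bl) = N"
      by (rule tidx_decompJ[OF _ J_def N])
    then show "s3 xs \<in> J" using pf(1) by (auto simp: J_def s3_def tidx_snoc)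
  qed
  have s3inv: "\<forall>y\<in>J. s3 (s3 y) = y"
  proof
    fix xs assume "xs \<in> J"
    then obtain bl l where "xs = bl @ [l]" "set bl \<subseteq> carrier G" "l \<in> carrier G" "Suc (length bl) = N"
      by (rule tidx_decompJ[OF _ J_def N])
    then show "s3 (s3 xs) = xs" using invol by (auto simp: s3_def intro!: map_idI)
  qed
  have p3bij: "bij_betw p3 J J"
  proof (rule bij_betw_byWitness[where f' = q3])
    show "\<forall>a\<in>J. q3 (p3 a) = a"
    proof
      fix xs assume "xs \<in> J"
      then obtain bl l where "xs = bl @ [l]" "set bl \<subseteq> carrier G" "l \<in> carrier G" "Suc (length bl) = N"
        by (rule tidx_decompJ[OF _ J_def N])
      then show "q3 (p3 xs) = xs" by (auto simp: p3_def q3_def m_assoc[symmetric] intro!: map_idI)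
    qed
    show "\<forall>a\<in>J. p3 (q3 a) = a"
    proof
      fix xs assume "xs \<in> J"
      then obtain bl l where "xs = bl @ [l]" "set bl \<subseteq> carrier G" "l \<in> carrier G" "Suc (length bl) = N"
        by (rule tidx_decompJ[OF _ J_def N])
      then show "p3 (q3 xs) = xs" by (auto simp: p3_def q3_def m_assoc[symmetric] intro!: map_idI)
    qed
    show "p3 ` J \<subseteq> J"
    proof (rule image_subsetI)
      fix xs assume "xs \<in> J"
      then obtain bl l where "xs = bl @ [l]" "set bl \<subseteq> carrier G" "l \<in> carrier G" "Suc (length bl) = N"
        by (rule tidx_decompJ[OF _ J_def N])
      then show "p3 xs \<in> J" by (auto simp: J_def p3_def tidx_snoc)
    qed
    show "q3 ` J \<subseteq> J"
    proof (rule image_subsetI)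
      fix xs assume "xs \<in> J"
      then obtain bl l where "xs = bl @ [l]" "set bl \<subseteq> carrier G" "l \<in> carrier G" "Suc (length bl) = N"
        by (rule tidx_decompJ[OF _ J_def N])
      then show "q3 xs \<in> J" by (auto simp: J_def q3_def tidx_snoc)
    qed
  qed
  have main: "unitary_on J U \<and> (\<forall>v. \<forall>x\<in>J. lin J U (sapp J (tpow (Drep G phi (g, b)))
               (lin J (adj U) v)) x = sapp J (id_tensor (Drep G phi (g, b))) v x)"
    if g: "g \<in> carrier G" for g b
  proof -
    define f where "f = (\<lambda>y. g \<otimes> (if b then phi y else y))"
    define m3 :: "'a list \<Rightarrow> 'a list" where "m3 = map f"
    define t3 :: "'a list \<Rightarrow> 'a list" where "t3 = (\<lambda>xs. butlast xs @ [f (last xs)])"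
    have fC: "f y \<in> carrier G" if "y \<in> carrier G" for y using that g pf(1) by (simp add: f_def)
    have finj: "inj_on f (carrier G)"
    proof (rule inj_onI)
      fix x y assume xy: "x \<in> carrier G" "y \<in> carrier G" "f x = f y"
      show "x = y"
      proof (cases b)
        case True
        then have "phi x = phi y" using xy g pf(1) by (simp add: f_def)
        then show ?thesis using pf(4) xy by (meson inj_on_eq_iff)
      next
        case False
        then show ?thesis using xy g by (simp add: f_def)
      qed
    qed
    have t3inj: "inj_on t3 J"
    proof (rule inj_onI)
      fix xs ys assume a: "xs \<in> J" "ys \<in> J" "t3 xs = t3 ys"
      obtain bl l where x: "xs = bl @ [l]" "set bl \<subseteq> carrier G" "l \<in> carrier G" "Suc (length bl) = N"
        using a(1) by (rule tidx_decompJ[OF _ J_def N])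
      obtain bl' l' where y: "ys = bl' @ [l']" "set bl' \<subseteq> carrier G" "l' \<in> carrier G" "Suc (length bl') = N"
        using a(2) by (rule tidx_decompJ[OF _ J_def N])
      have "bl = bl'" "f l = f l'" using a(3) x y by (simp_all add: t3_def)
      then show "xs = ys" using x y finj by (simp add: inj_on_eq_iff)
    qed
    have t3J: "t3 ` J \<subseteq> J"
    proof (rule image_subsetI)
      fix xs assume "xs \<in> J"
      then obtain bl l where "xs = bl @ [l]" "set bl \<subseteq> carrier G" "l \<in> carrier G" "Suc (length bl) = N"
        by (rule tidx_decompJ[OF _ J_def N])
      then show "t3 xs \<in> J" using fC by (auto simp: J_def t3_def tidx_snoc)
    qed
    have st: "\<forall>y\<in>J. s3 (t3 y) = t3 (s3 y)" by (simp add: s3_def t3_def)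
    have m3J: "m3 ` J \<subseteq> J"
    proof (rule image_subsetI)
      fix xs assume "xs \<in> J"
      then show "m3 xs \<in> J" using fC by (auto simp: J_def m3_def tidx_def)
    qed
    have u: "\<forall>x\<in>J. \<forall>y\<in>J. U x y = Wm J s3 x (p3 y)" by (simp add: U_def)
    have M: "\<forall>x\<in>J. \<forall>y\<in>J. fst (tpow (Drep G phi (g, b))) x y = (if x = m3 y then 1 else 0)"
    proof (intro ballI)
      fix xs ys assume xy: "xs \<in> J" "ys \<in> J"
      then have len: "length xs = length ys" by (simp add: J_def tidx_def)
      have "fst (tpow (Drep G phi (g, b))) xs ys = (\<Prod>i<length xs. if xs ! i = f (ys ! i) then 1 else 0)"
        by (simp add: tpow_def Drep_fst f_def)
      also have "\<dots> = (if xs = m3 ys then 1 else 0)"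
        using len by (simp add: prod_ind m3_def list_eq_iff_nth_eq)
      finally show "fst (tpow (Drep G phi (g, b))) xs ys = (if xs = m3 ys then 1 else 0)" .
    qed
    have T: "\<forall>x\<in>J. \<forall>y\<in>J. fst (id_tensor (Drep G phi (g, b))) x y = (if x = t3 y then 1 else 0)"
    proof (intro ballI)
      fix xs ys assume a: "xs \<in> J" "ys \<in> J"
      obtain bl l where x: "xs = bl @ [l]" "set bl \<subseteq> carrier G" "l \<in> carrier G" "Suc (length bl) = N"
        using a(1) by (rule tidx_decompJ[OF _ J_def N])
      obtain bl' l' where y: "ys = bl' @ [l']" "set bl' \<subseteq> carrier G" "l' \<in> carrier G" "Suc (length bl') = N"
        using a(2) by (rule tidx_decompJ[OF _ J_def N])
      show "fst (id_tensor (Drep G phi (g, b))) xs ys = (if xs = t3 ys then 1 else 0)"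
        using x y by (simp add: id_tensor_def Drep_fst t3_def f_def)
    qed
    have rel: "\<forall>y\<in>J. p3 (m3 y) = (if b then s3 (t3 (p3 y)) else t3 (p3 y))"
    proof
      fix ys assume "ys \<in> J"
      then obtain bl l where y: "ys = bl @ [l]" "set bl \<subseteq> carrier G" "l \<in> carrier G" "Suc (length bl) = N"
        by (rule tidx_decompJ[OF _ J_def N])
      have e: "\<forall>z\<in>set bl. inv (f l) \<otimes> f z = (if b then phi (inv l \<otimes> z) else inv l \<otimes> z)"
        using y g pf by (auto simp: f_def inv_cancel3)
      show "p3 (m3 ys) = (if b then s3 (t3 (p3 ys)) else t3 (p3 ys))"
        using e y by (cases b) (simp_all add: p3_def m3_def s3_def t3_def map_eq_conv)
    qed
    show ?thesis
      by (rule generic[OF finJ s3J s3inv p3bij t3inj t3J st m3J u M _ T _ rel]) (simp_all add: tpow_def id_tensor_def Drep_snd)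
  qed
  show ?thesis
  proof (intro exI conjI)
    show "unitary_on (tidx G N) U" using main[OF one_closed] by (simp add: J_def)
    show "\<forall>g\<in>carrier G. \<forall>b. \<forall>v. \<forall>x\<in>tidx G N.
             lin (tidx G N) U (sapp (tidx G N) (tpow (Drep G phi (g, b)))
               (lin (tidx G N) (adj U) v)) x
           = sapp (tidx G N) (id_tensor (Drep G phi (g, b))) v x"
      using main by (simp add: J_def)
  qed
qed


theorem mainTheorem7:
  fixes G :: "('a, 'b) monoid_scheme" and phi :: "'a \<Rightarrow> 'a"
  assumes "group G" and "finite (carrier G)"
    and "phi \<in> iso G G" and "\<forall>x\<in>carrier G. phi (phi x) = x"
  shows "unitary_on (carrier G \<times> carrier G) (umat G phi)
    \<and> (\<forall>g\<in>carrier G. \<forall>b. \<forall>v. \<forall>x\<in>carrier G \<times> carrier G.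
          lin (carrier G \<times> carrier G) (umat G phi)
            (sapp (carrier G \<times> carrier G) (stensor (Drep G phi (g, b)) (Drep G phi (g, b)))
              (lin (carrier G \<times> carrier G) (adj (umat G phi)) v)) x
        = sapp (carrier G \<times> carrier G) (stensor (idm, b) (Drep G phi (g, b))) v x)
    \<and> (\<forall>N\<ge>1. \<exists>U. unitary_on (tidx G N) U \<and>
          (\<forall>g\<in>carrier G. \<forall>b. \<forall>v. \<forall>x\<in>tidx G N.
             lin (tidx G N) U (sapp (tidx G N) (tpow (Drep G phi (g, b)))
               (lin (tidx G N) (adj U) v)) x
           = sapp (tidx G N) (id_tensor (Drep G phi (g, b))) v x))"
proof -
  interpret group G by (rule assms(1))
  have A: "unitary_on (carrier G \<times> carrier G) (umat G phi)"
    using part2[OF assms(1-4) one_closed] by blast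
  show ?thesis
  proof (intro conjI)
    show "unitary_on (carrier G \<times> carrier G) (umat G phi)" by (rule A)
    show "\<forall>g\<in>carrier G. \<forall>b. \<forall>v. \<forall>x\<in>carrier G \<times> carrier G.
          lin (carrier G \<times> carrier G) (umat G phi)
            (sapp (carrier G \<times> carrier G) (stensor (Drep G phi (g, b)) (Drep G phi (g, b)))
              (lin (carrier G \<times> carrier G) (adj (umat G phi)) v)) x
        = sapp (carrier G \<times> carrier G) (stensor (idm, b) (Drep G phi (g, b))) v x"
      using part2[OF assms(1-4)] by blast
    show "\<forall>N\<ge>1. \<exists>U. unitary_on (tidx G N) U \<and>
          (\<forall>g\<in>carrier G. \<forall>b. \<forall>v. \<forall>x\<in>tidx G N.
             lin (tidx G N) U (sapp (tidx G N) (tpow (Drep G phi (g, b)))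
               (lin (tidx G N) (adj U) v)) x
           = sapp (tidx G N) (id_tensor (Drep G phi (g, b))) v x)"
      using part3[OF assms(1-4)] by blast
  qed
qed

end
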